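(* Assume (A1) and let $S(x,t)=\inf_{v\in\mathbb{R}^n}\{J(x-tv)+tH^*(v)\}$ for $x\in\mathbb{R}^n$, $t>0$. Let $v^{(0)}\in\mathrm{int}\,\mathrm{dom}\,H^*$ and $d\in\mathrm{dom}\,J$. Then $$\lim_{t\to+\infty}\frac{S(d+tv^{(0)},t)}{t}=H^*(v^{(0)}).$$ If moreover $0\in\mathrm{dom}\,J$ and, for $t>0$, $F(x,t)=\inf_{v\in\mathrm{int}\,\mathrm{dom}\,H^*}\{tD_{H^*}(x/t,v)+J^*(\nabla H^*(v))\}$, then $$\lim_{t\to+\infty}\frac{F(tv^{(0)},t)}{t}=0.$$
   Context: $\Gamma_0(\mathbb{R}^n)$ denotes the set of proper, convex, lower semicontinuous functions $\mathbb{R}^n\to\mathbb{R}\cup\{+\infty\}$; $f^*$ is the Legendre–Fenchel transform. A function $g$ is 1-coercive if $g(x)/\|x\|\to+\infty$ as $\|x\|\to\infty$. A function $f\in\Gamma_0(\mathbb{R}^n)$ is Legendre if: $\mathrm{int}\,\mathrm{dom}\,f\neq\emptyset$; $f$ is differentiable on $\mathrm{int}\,\mathrm{dom}\,f$; $\partial f(x)=\emptyset$ for $x\in\mathrm{dom}\,f\setminus\mathrm{int}\,\mathrm{dom}\,f$ and $\partial f(x)=\{\nabla f(x)\}$ on $\mathrm{int}\,\mathrm{dom}\,f$; and $f$ is strictly convex on $\mathrm{int}\,\mathrm{dom}\,f$. $D_f(x,u)=f(x)-f(u)-\langle\nabla f(u),x-u\rangle$. Assumption (A1): $J,H\in\Gamma_0(\mathbb{R}^n)$,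 $J$ is 1-coercive, and $H$ is a Legendre function. *)

theory Defs
  imports "HOL-Analysis.Analysis" "HOL-Library.Extended_Real"
begin

definition edom :: "('a \<Rightarrow> ereal) \<Rightarrow> 'a set" where
  "edom f = {x. f x < \<infinity>}"

definition proper_fun :: "('a \<Rightarrow> ereal) \<Rightarrow> bool" where
  "proper_fun f \<longleftrightarrow> (\<forall>x. f x \<noteq> -\<infinity>) \<and> (\<exists>x. f x \<noteq> \<infinity>)"

text \<open>Convexity of an extended-valued function (proper case): convex domain and
  convexity of the (real) restriction to the domain, i.e. convex epigraph.\<close>
definition econvex :: "('a::real_vector \<Rightarrow> ereal) \<Rightarrow> bool" where
  "econvex f \<longleftrightarrow> convex (edom f) \<and> convex_on (edom f) (\<lambda>x. real_of_ereal (f x))"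

definition lsc :: "('a::topological_space \<Rightarrow> ereal) \<Rightarrow> bool" where
  "lsc f \<longleftrightarrow> (\<forall>x. f x \<le> Liminf (at x) f)"

definition Gamma0 :: "('a::real_normed_vector \<Rightarrow> ereal) set" where
  "Gamma0 = {f. proper_fun f \<and> econvex f \<and> lsc f}"

definition fconj :: "('a::real_inner \<Rightarrow> ereal) \<Rightarrow> 'a \<Rightarrow> ereal" where
  "fconj f y = (SUP x. ereal (inner x y) - f x)"

definition one_coercive :: "('a::real_normed_vector \<Rightarrow> ereal) \<Rightarrow> bool" where
  "one_coercive g \<longleftrightarrow> filterlim (\<lambda>x. g x / ereal (norm x)) at_top at_infinity"

definition subdiff :: "('a::real_inner \<Rightarrow> ereal) \<Rightarrow> 'a \<Rightarrow> 'a set" where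
  "subdiff f x = {g. f x < \<infinity> \<and> (\<forall>y. f x + ereal (inner g (y - x)) \<le> f y)}"

definition grad :: "('a::real_inner \<Rightarrow> ereal) \<Rightarrow> 'a \<Rightarrow> 'a" where
  "grad f x = (SOME g. ((\<lambda>y. real_of_ereal (f y)) has_derivative (\<lambda>h. inner g h)) (at x))"

definition edifferentiable_at :: "('a::real_normed_vector \<Rightarrow> ereal) \<Rightarrow> 'a \<Rightarrow> bool" where
  "edifferentiable_at f x \<longleftrightarrow> (\<lambda>y. real_of_ereal (f y)) differentiable (at x)"

definition strictly_convex_on :: "'a::real_vector set \<Rightarrow> ('a \<Rightarrow> ereal) \<Rightarrow> bool" where
  "strictly_convex_on S f \<longleftrightarrow> (\<forall>x\<in>S. \<forall>y\<in>S. \<forall>u::real. x \<noteq> y \<and> 0 < u \<and> u < 1 \<longrightarrow>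
      f (u *\<^sub>R x + (1 - u) *\<^sub>R y) < ereal u * f x + ereal (1 - u) * f y)"

definition legendre :: "('a::real_inner \<Rightarrow> ereal) \<Rightarrow> bool" where
  "legendre f \<longleftrightarrow> f \<in> Gamma0
     \<and> interior (edom f) \<noteq> {}
     \<and> (\<forall>x\<in>interior (edom f). edifferentiable_at f x)
     \<and> (\<forall>x\<in>edom f - interior (edom f). subdiff f x = {})
     \<and> (\<forall>x\<in>interior (edom f). subdiff f x = {grad f x})
     \<and> strictly_convex_on (interior (edom f)) f"

definition bregman :: "('a::real_inner \<Rightarrow> ereal) \<Rightarrow> 'a \<Rightarrow> 'a \<Rightarrow> ereal" where
  "bregman f x u = f x - f u - ereal (inner (grad f u) (x - u))"

definition hopf_lax :: "('a::real_inner \<Rightarrow> ereal) \<Rightarrow> ('a \<Rightarrow> ereal) \<Rightarrow> 'a \<Rightarrow> real \<Rightarrow> ereal" where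
  "hopf_lax J H x t = (INF v. J (x - t *\<^sub>R v) + ereal t * fconj H v)"

definition bregman_repr :: "('a::real_inner \<Rightarrow> ereal) \<Rightarrow> ('a \<Rightarrow> ereal) \<Rightarrow> 'a \<Rightarrow> real \<Rightarrow> ereal" where
  "bregman_repr J H x t = (INF v \<in> interior (edom (fconj H)).
      ereal t * bregman (fconj H) ((1 / t) *\<^sub>R x) v + fconj J (grad (fconj H) v))"

end

theory Submission
  imports Defs
begin

lemma conj_upper: "ereal (inner x y) - f x \<le> fconj f y"
  unfolding fconj_def by (rule SUP_upper) auto

lemma conj_lower: "f x = ereal a \<Longrightarrow> ereal (inner x y - a) \<le> fconj f y"
  using conj_upper[of x y f] by simp

lemma conj_real_le: "fconj f y = ereal c \<Longrightarrow> f x = ereal a \<Longrightarrow> inner x y - a \<le> c"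
  using conj_lower[of f x a y] by simp

lemma conj_le_real:
  assumes "\<And>x a. f x = ereal a \<Longrightarrow> inner x y - a \<le> c" "\<And>x. f x \<noteq> -\<infinity>"
  shows "fconj f y \<le> ereal c"
  unfolding fconj_def
proof (rule SUP_least)
  fix x
  show "ereal (inner x y) - f x \<le> ereal c"
  proof (cases "f x")
    case (real r) then show ?thesis using assms(1)[of x r] by simp
  next
    case PInf then show ?thesis by simp
  next
    case MInf then show ?thesis using assms(2)[of x] by simp
  qed
qed

lemma lsc_seq_ev:
  fixes f :: "'a::metric_space \<Rightarrow> ereal"
  assumes "lsc f" "X \<longlonglongrightarrow> x" "c < f x"
  shows "eventually (\<lambda>k. c < f (X k)) sequentially"
proof -
  have "f x \<le> Liminf (at x) f" using assms(1) unfolding lsc_def by blast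
  hence "eventually (\<lambda>y. c < f y) (at x)" using assms(3) le_Liminf_iff by blast
  then obtain d where d: "d > 0" "\<And>y. y \<noteq> x \<Longrightarrow> dist y x < d \<Longrightarrow> c < f y"
    unfolding eventually_at by blast
  have "eventually (\<lambda>k. dist (X k) x < d) sequentially"
    using assms(2) d(1) by (rule tendstoD)
  thus ?thesis
    by eventually_elim (metis assms(3) d(2))
qed

lemma lsc_seq:
  fixes f :: "'a::metric_space \<Rightarrow> ereal"
  assumes "lsc f" "X \<longlonglongrightarrow> x" "eventually (\<lambda>k. f (X k) \<le> ereal (b k)) sequentially"
    "b \<longlonglongrightarrow> L"
  shows "f x \<le> ereal L"
proof (rule ccontr)
  assume "\<not> f x \<le> ereal L"
  hence "ereal L < f x" by simp
  then obtain c where c: "ereal L < c" "c < f x" using dense by blast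
  then obtain c' where c': "c = ereal c'" "L < c'" using c by (cases c) auto
  have e1: "eventually (\<lambda>k. c < f (X k)) sequentially" using lsc_seq_ev[OF assms(1,2) c(2)] .
  have e2: "eventually (\<lambda>k. b k < c') sequentially" using assms(4) c'(2) order_tendstoD(2) by blast
  have "eventually (\<lambda>k. False) sequentially"
    using e1 e2 assms(3) by eventually_elim (metis c'(1) ereal_less_eq(3) less_le_not_le order_le_less_trans)
  thus False by simp
qed

lemma lsc_bdd_below:
  fixes f :: "'a::metric_space \<Rightarrow> ereal"
  assumes "lsc f" "\<And>x. f x \<noteq> -\<infinity>" "compact K"
  shows "\<exists>C. \<forall>x\<in>K. ereal C \<le> f x"
proof (rule ccontr)
  assume "\<not> ?thesis"
  hence "\<forall>k::nat. \<exists>x\<in>K. f x < ereal (- real k)" by (meson not_le)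
  then obtain X where X: "\<And>k. X k \<in> K" "\<And>k. f (X k) < ereal (- real k)" by metis
  obtain l r where lr: "l \<in> K" "strict_mono r" "(X \<circ> r) \<longlonglongrightarrow> l"
    using seq_compactE[OF compact_imp_seq_compact[OF assms(3)], of X] X(1) by blast
  obtain c where c: "ereal c < f l" using assms(2)[of l]
    by (cases "f l") (auto, meson lt_ex)
  have e1: "eventually (\<lambda>k. ereal c < f ((X \<circ> r) k)) sequentially"
    using lsc_seq_ev[OF assms(1) lr(3) c] .
  have e2: "eventually (\<lambda>k. c > - real k) sequentially"
  proof -
    obtain N :: nat where "N > - c" using reals_Archimedean2 by blast
    thus ?thesis unfolding eventually_sequentially by (intro exI[of _ N]) auto
  qed
  have "eventually (\<lambda>k. False) sequentially"
  proof (rule eventually_mono[OF eventually_conj[OF e1 e2]])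
    fix k assume h: "ereal c < f ((X \<circ> r) k) \<and> - real k < c"
    have "r k \<ge> k" using lr(2) seq_suble by blast
    hence "f (X (r k)) < ereal (- real k)" using X(2)[of "r k"] by (smt (verit) ereal_less_eq(3) of_nat_mono order_less_le_trans)
    hence "ereal c < ereal (- real k)" using h by (metis comp_apply order_less_trans)
    thus False using h by simp
  qed
  thus False by simp
qed

lemma gamma0_proper: "J \<in> Gamma0 \<Longrightarrow> J x \<noteq> -\<infinity>"
  unfolding Gamma0_def proper_fun_def by blast

lemma gamma0_lsc: "J \<in> Gamma0 \<Longrightarrow> lsc J"
  unfolding Gamma0_def by blast

lemma coercive_bound:
  fixes J :: "'a::euclidean_space \<Rightarrow> ereal"
  assumes "J \<in> Gamma0" "one_coercive J" "M \<ge> 0"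
  shows "\<exists>K. \<forall>y. ereal (M * norm y - K) \<le> J y"
proof -
  have "eventually (\<lambda>y. ereal M \<le> J y / ereal (norm y)) at_infinity"
    using assms(2) unfolding one_coercive_def filterlim_at_top by blast
  then obtain R where R: "\<And>y. R \<le> norm y \<Longrightarrow> ereal M \<le> J y / ereal (norm y)"
    unfolding eventually_at_infinity by blast
  define R' where "R' = max R 1"
  have big: "ereal (M * norm y) \<le> J y" if "R' \<le> norm y" for y
  proof -
    have "norm y > 0" using that unfolding R'_def by auto
    moreover have "ereal M \<le> J y / ereal (norm y)" using R that unfolding R'_def by auto
    ultimately have "ereal (norm y) * ereal M \<le> J y" using ereal_le_divide_pos by auto
    thus ?thesis by (simp add: mult.commute)
  qed
  obtain C where C: "\<forall>x\<in>cball 0 R'. ereal C \<le> J x"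
    using lsc_bdd_below[OF gamma0_lsc[OF assms(1)] gamma0_proper[OF assms(1)] compact_cball] by blast
  show ?thesis
  proof (intro exI allI)
    fix y
    show "ereal (M * norm y - max 0 (M * R' - C)) \<le> J y"
    proof (cases "R' \<le> norm y")
      case True
      have "ereal (M * norm y - max 0 (M * R' - C)) \<le> ereal (M * norm y)" by simp
      also have "\<dots> \<le> J y" using big True by blast
      finally show ?thesis .
    next
      case False
      hence "M * norm y \<le> M * R'" using assms(3) by (simp add: mult_left_mono)
      hence "ereal (M * norm y - max 0 (M * R' - C)) \<le> ereal C" by simp
      also have "\<dots> \<le> J y" using C False by simp
      finally show ?thesis .
    qed
  qed
qed

lemma core1:
  fixes d v0 v x0 :: "'a::real_inner"
  assumes "\<delta> > 0" "\<epsilon> > 0" "t > 0" "M \<ge> norm x0"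
    "(M - norm x0) * \<delta> \<ge> norm x0 * norm v0 + \<bar>h0\<bar> + \<bar>c0\<bar> + 1"
    "j \<ge> M * norm (d + t *\<^sub>R (v0 - v)) - K" "c \<ge> inner x0 v - h0"
    "norm (v - v0) < \<delta> \<Longrightarrow> c \<ge> c0 - \<epsilon>/2" "t*\<epsilon>/2 \<ge> K" "t*\<epsilon> \<ge> M * norm d + K"
  shows "j + t*c \<ge> t*(c0 - \<epsilon>)"
proof (cases "norm (v - v0) < \<delta>")
  case True
  have M0: "M \<ge> 0" using assms(4) norm_ge_zero order_trans by blast
  have "M * norm (d + t *\<^sub>R (v0 - v)) \<ge> 0" using M0 by simp
  hence j: "j \<ge> -K" using assms(6) by linarith
  have "t * c \<ge> t * (c0 - \<epsilon>/2)" using assms(3) assms(8)[OF True] by (simp add: mult_left_mono)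
  thus ?thesis using j assms(9) by (simp add: algebra_simps)
next
  case False
  define s where "s = norm (v - v0)"
  define B where "B = norm x0"
  have sd: "s \<ge> \<delta>" using False s_def by simp
  have M0: "M - B \<ge> 0" using assms(4) B_def by simp
  have n1: "norm (t *\<^sub>R (v0 - v)) = t * s" using assms(3) s_def by (simp add: norm_minus_commute)
  have "norm (t *\<^sub>R (v0 - v)) \<le> norm (d + t *\<^sub>R (v0 - v)) + norm d"
    by (metis add_diff_cancel_left' norm_triangle_ineq4 add.commute)
  hence ny: "norm (d + t *\<^sub>R (v0 - v)) \<ge> t * s - norm d" using n1 by simp
  have "M \<ge> 0" using M0 B_def norm_ge_zero[of x0] by linarith
  hence "M * norm (d + t *\<^sub>R (v0 - v)) \<ge> M * (t * s - norm d)" using ny by (simp add: mult_left_mono)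
  hence j: "j \<ge> t * M * s - M * norm d - K" using assms(6) by (simp add: algebra_simps)
  have "inner x0 v \<ge> - (B * norm v)" using norm_cauchy_schwarz[of "-x0" v] B_def by simp
  moreover have "norm v \<le> s + norm v0" using s_def norm_triangle_ineq4[of v v0]
    by (metis add.commute diff_add_cancel norm_triangle_ineq)
  moreover have "B \<ge> 0" using B_def by simp
  ultimately have "B * norm v \<le> B * (s + norm v0)" using mult_left_mono by blast
  hence "c \<ge> - B * s - B * norm v0 - h0" using assms(7) \<open>inner x0 v \<ge> - (B * norm v)\<close>
    by (simp add: algebra_simps)
  hence tc: "t * c \<ge> t * (- B * s - B * norm v0 - h0)" using assms(3) by (simp add: mult_left_mono)
  hence tc': "t * c \<ge> - (t * B * s) - t * B * norm v0 - t * h0" by (simp add: algebra_simps)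
  have "(M - B) * s \<ge> (M - B) * \<delta>" using sd M0 by (simp add: mult_left_mono)
  hence "(M - B) * s \<ge> B * norm v0 + \<bar>h0\<bar> + \<bar>c0\<bar> + 1" using assms(5) B_def by simp
  hence "t * ((M - B) * s) \<ge> t * (B * norm v0 + \<bar>h0\<bar> + \<bar>c0\<bar> + 1)" using assms(3) by (simp add: mult_left_mono)
  hence key: "t * M * s - t * B * s \<ge> t * B * norm v0 + t * \<bar>h0\<bar> + t * \<bar>c0\<bar> + t"
    by (simp add: algebra_simps)
  have a1: "t * \<bar>h0\<bar> \<ge> t * h0" "t * \<bar>c0\<bar> \<ge> t * c0" using assms(3) by (simp_all add: mult_left_mono)
  have "t * (c0 - \<epsilon>) = t * c0 - t * \<epsilon>" by (simp add: algebra_simps)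
  thus ?thesis using j tc' key assms(10) a1 assms(3) by linarith
qed

lemma gamma0_finite_pt: assumes "J \<in> Gamma0" shows "\<exists>x a. J x = ereal a"
proof -
  obtain x where "J x \<noteq> \<infinity>" using assms unfolding Gamma0_def proper_fun_def by blast
  moreover have "J x \<noteq> -\<infinity>" using gamma0_proper[OF assms] .
  ultimately show ?thesis by (cases "J x") auto
qed

lemma fconj_not_MInf: assumes "H \<in> Gamma0" shows "fconj H v \<noteq> -\<infinity>"
proof -
  obtain x a where "H x = ereal a" using gamma0_finite_pt[OF assms] by blast
  from conj_lower[of H x a v] this show ?thesis by auto
qed

lemma edom_real: assumes "J \<in> Gamma0" "x \<in> edom J" obtains a where "J x = ereal a"
  using assms gamma0_proper[OF assms(1), of x] unfolding edom_def by (cases "J x") auto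

lemma fconj_edom_real: assumes "H \<in> Gamma0" "v \<in> edom (fconj H)" obtains c where "fconj H v = ereal c"
  using assms fconj_not_MInf[OF assms(1), of v] unfolding edom_def by (cases "fconj H v") auto

lemma fconj_lsc_pt:
  assumes "H \<in> Gamma0" "fconj H v0 = ereal c0" "e > 0"
  shows "\<exists>\<delta>>0. \<forall>v. norm (v - v0) < \<delta> \<longrightarrow> ereal (c0 - e) \<le> fconj H v"
proof -
  have "ereal (c0 - e/2) < fconj H v0" using assms by simp
  then obtain x1 where x1: "ereal (c0 - e/2) < ereal (inner x1 v0) - H x1"
    unfolding fconj_def less_SUP_iff by blast
  then obtain h1 where h1: "H x1 = ereal h1" using gamma0_proper[OF assms(1), of x1] by (cases "H x1") auto
  have lt: "c0 - e/2 < inner x1 v0 - h1" using x1 h1 by simp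
  define \<delta> where "\<delta> = e / (2 * (norm x1 + 1))"
  have "2 * (norm x1 + 1) > 0" by (smt (verit) norm_ge_zero)
  hence dpos: "\<delta> > 0" using assms(3) \<delta>_def by (simp add: divide_pos_pos)
  show ?thesis
  proof (intro exI conjI allI impI)
    show "\<delta> > 0" by (fact dpos)
    fix v assume v: "norm (v - v0) < \<delta>"
    have "\<bar>inner x1 (v - v0)\<bar> \<le> norm x1 * norm (v - v0)" by (rule Cauchy_Schwarz_ineq2)
    also have "\<dots> \<le> norm x1 * \<delta>" using v by (simp add: mult_left_mono)
    also have "\<dots> < e / 2"
    proof -
      have "norm x1 * \<delta> = e/2 * (norm x1 / (norm x1 + 1))" unfolding \<delta>_def by (simp add: field_simps)
      also have "\<dots> < e/2 * 1"
      proof (intro mult_strict_left_mono)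
        have p: "norm x1 + 1 > 0" by (smt (verit) norm_ge_zero)
        thus "norm x1 / (norm x1 + 1) < 1" by (simp add: divide_less_eq)
      qed (use assms(3) in simp)
      finally show ?thesis by simp
    qed
    finally have h: "\<bar>inner x1 (v - v0)\<bar> < e / 2" .
    have "inner x1 (v - v0) > - (e/2)" using h by arith
    hence "inner x1 v - inner x1 v0 > - (e/2)" by (simp add: inner_diff_right)
    hence "c0 - e < inner x1 v - h1" using lt by linarith
    hence "ereal (c0 - e) \<le> ereal (inner x1 v - h1)" by simp
    also have "\<dots> \<le> fconj H v" by (rule conj_lower[of H x1 h1 v, OF h1])
    finally show "ereal (c0 - e) \<le> fconj H v" .
  qed
qed

lemma part1:
  fixes J H :: "'a::euclidean_space \<Rightarrow> ereal"
  assumes J: "J \<in> Gamma0" "one_coercive J" and H: "H \<in> Gamma0"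
    and v0: "v0 \<in> edom (fconj H)" and d: "d \<in> edom J"
  shows "((\<lambda>t. hopf_lax J H (d + t *\<^sub>R v0) t / ereal t) \<longlongrightarrow> fconj H v0) at_top"
proof -
  obtain c0 where c0: "fconj H v0 = ereal c0" using fconj_edom_real[OF H v0] .
  obtain jd where jd: "J d = ereal jd" using edom_real[OF J(1) d] .
  obtain x0 h0 where x0: "H x0 = ereal h0" using gamma0_finite_pt[OF H] by blast
  show ?thesis unfolding c0
  proof (rule order_tendstoI)
    fix b assume b: "ereal c0 < b"
    have up: "hopf_lax J H (d + t *\<^sub>R v0) t / ereal t \<le> ereal (jd / t + c0)" if "t > 0" for t
    proof -
      have "hopf_lax J H (d + t *\<^sub>R v0) t \<le> J (d + t *\<^sub>R v0 - t *\<^sub>R v0) + ereal t * fconj H v0"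
        unfolding hopf_lax_def by (rule INF_lower) simp
      also have "\<dots> = ereal (jd + t * c0)" using jd c0 by simp
      also have "\<dots> = ereal t * ereal (jd / t + c0)" using that by (simp add: field_simps)
      finally show ?thesis using that by (subst ereal_divide_le_pos) auto
    qed
    show "eventually (\<lambda>t. hopf_lax J H (d + t *\<^sub>R v0) t / ereal t < b) at_top"
    proof (cases b)
      case PInf
      show ?thesis unfolding eventually_at_top_linorder
        by (intro exI[of _ 1] allI impI, rule le_less_trans[OF up]) (auto simp: PInf)
    next
      case (real b')
      hence bc: "b' - c0 > 0" using b by simp
      show ?thesis unfolding eventually_at_top_linorder
      proof (intro exI[of _ "\<bar>jd\<bar> / (b' - c0) + 1"] allI impI)
        fix t assume t: "t \<ge> \<bar>jd\<bar> / (b' - c0) + 1"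
        have tpos: "t > 0" using t bc by (smt (verit) divide_nonneg_pos abs_ge_zero)
        have "\<bar>jd\<bar> < (b' - c0) * t" using t bc by (simp add: field_simps)
        hence "jd / t < b' - c0" using tpos by (simp add: field_simps)
        hence "ereal (jd / t + c0) < b" using real by simp
        thus "hopf_lax J H (d + t *\<^sub>R v0) t / ereal t < b" using le_less_trans[OF up[OF tpos]] by blast
      qed
    qed (use b in auto)
  next
    fix a assume a: "a < ereal c0"
    then obtain a'' where a'': "a < a''" "a'' < ereal c0" using dense by blast
    then obtain a' where a': "a'' = ereal a'" by (cases a'') auto
    define \<epsilon> where "\<epsilon> = c0 - a'"
    have eps: "\<epsilon> > 0" using a'' a' \<epsilon>_def by simp
    obtain \<delta> where dl: "\<delta> > 0" "\<And>v. norm (v - v0) < \<delta> \<Longrightarrow> ereal (c0 - \<epsilon>/2) \<le> fconj H v"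
      using fconj_lsc_pt[OF H c0, of "\<epsilon>/2"] eps by auto
    define M where "M = norm x0 + (norm x0 * norm v0 + \<bar>h0\<bar> + \<bar>c0\<bar> + 1) / \<delta>"
    have M1: "M \<ge> norm x0" unfolding M_def using dl(1) by simp
    have M2: "(M - norm x0) * \<delta> \<ge> norm x0 * norm v0 + \<bar>h0\<bar> + \<bar>c0\<bar> + 1"
      unfolding M_def using dl(1) by simp
    have "M \<ge> 0" using M1 norm_ge_zero order_trans by blast
    then obtain K where K: "\<And>y. ereal (M * norm y - K) \<le> J y" using coercive_bound[OF J] by blast
    define T where "T = 1 + 2 * (\<bar>K\<bar> + M * norm d) / \<epsilon>"
    show "eventually (\<lambda>t. a < hopf_lax J H (d + t *\<^sub>R v0) t / ereal t) at_top"
      unfolding eventually_at_top_linorder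
    proof (intro exI[of _ T] allI impI)
      fix t assume t: "t \<ge> T"
      have nn: "2 * (\<bar>K\<bar> + M * norm d) / \<epsilon> \<ge> 0" using eps \<open>M \<ge> 0\<close> by simp
      hence tpos: "t > 0" using t T_def by linarith
      have "t * \<epsilon> \<ge> 2 * (\<bar>K\<bar> + M * norm d)" using t nn eps unfolding T_def
        by (simp add: field_simps)
      hence "t * \<epsilon> \<ge> 2 * \<bar>K\<bar> + 2 * (M * norm d)" by simp
      moreover have "M * norm d \<ge> 0" using \<open>M \<ge> 0\<close> by simp
      moreover have "K \<le> \<bar>K\<bar>" by simp
      ultimately have t1: "t*\<epsilon>/2 \<ge> K" by linarith
      have t2: "t*\<epsilon> \<ge> M * norm d + K" using \<open>2 * \<bar>K\<bar> + 2 * (M * norm d) \<le> t * \<epsilon>\<close> \<open>M * norm d \<ge> 0\<close> \<open>K \<le> \<bar>K\<bar>\<close> by linarith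
      have "ereal (t * a') \<le> hopf_lax J H (d + t *\<^sub>R v0) t"
        unfolding hopf_lax_def
      proof (rule INF_greatest)
        fix v
        have eq: "d + t *\<^sub>R v0 - t *\<^sub>R v = d + t *\<^sub>R (v0 - v)" by (simp add: algebra_simps)
        show "ereal (t * a') \<le> J (d + t *\<^sub>R v0 - t *\<^sub>R v) + ereal t * fconj H v"
        proof (cases "fconj H v")
          case PInf
          thus ?thesis using tpos gamma0_proper[OF J(1)] by simp
        next
          case MInf thus ?thesis using fconj_not_MInf[OF H] by simp
        next
          case (real c)
          show ?thesis
          proof (cases "J (d + t *\<^sub>R v0 - t *\<^sub>R v)")
            case PInf thus ?thesis using real by simp
          next
            case MInf thus ?thesis using gamma0_proper[OF J(1)] by simp
          next
            case (real j)
            have j: "j \<ge> M * norm (d + t *\<^sub>R (v0 - v)) - K" using K[of "d + t *\<^sub>R (v0 - v)"] real eq by simp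
            have cc: "c \<ge> inner x0 v - h0" using conj_real_le[OF \<open>fconj H v = ereal c\<close> x0] by simp
            have cn: "c \<ge> c0 - \<epsilon>/2" if "norm (v - v0) < \<delta>" using dl(2)[OF that] \<open>fconj H v = ereal c\<close> by simp
            have "j + t * c \<ge> t * (c0 - \<epsilon>)"
              by (rule core1[OF dl(1) eps tpos M1 M2 j cc cn t1 t2])
            thus ?thesis using real \<open>fconj H v = ereal c\<close> \<epsilon>_def by simp
          qed
        qed
      qed
      hence "ereal a' \<le> hopf_lax J H (d + t *\<^sub>R v0) t / ereal t"
        using tpos by (subst ereal_le_divide_pos) (auto simp: mult.commute)
      thus "a < hopf_lax J H (d + t *\<^sub>R v0) t / ereal t" using a'' a' by simp
    qed
  qed
qed

context
  fixes H :: "'a::euclidean_space \<Rightarrow> ereal"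
  assumes H: "H \<in> Gamma0"
begin

lemma fconj_comb:
  assumes "fconj H a = ereal ca" "fconj H b = ereal cb" "u \<ge> 0" "w \<ge> 0" "u + w = 1"
  shows "fconj H (u *\<^sub>R a + w *\<^sub>R b) \<le> ereal (u * ca + w * cb)"
proof (rule conj_le_real)
  fix x h assume hx: "H x = ereal h"
  have 1: "inner x a - h \<le> ca" using conj_real_le[OF assms(1) hx] .
  have 2: "inner x b - h \<le> cb" using conj_real_le[OF assms(2) hx] .
  have e1: "inner x (u *\<^sub>R a + w *\<^sub>R b) = u * inner x a + w * inner x b" by (simp add: inner_add_right)
  have e2: "u * h + w * h = h" using assms(5) by (simp add: distrib_right[symmetric])
  have e3: "u * (inner x a - h) + w * (inner x b - h) = u * inner x a - u * h + (w * inner x b - w * h)"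
    by (simp add: right_diff_distrib)
  have "inner x (u *\<^sub>R a + w *\<^sub>R b) - h = u * (inner x a - h) + w * (inner x b - h)"
    using e1 e2 e3 by linarith
  also have "\<dots> \<le> u * ca + w * cb"
    using 1 2 assms(3,4) by (intro add_mono mult_left_mono) auto
  finally show "inner x (u *\<^sub>R a + w *\<^sub>R b) - h \<le> u * ca + w * cb" .
qed (use gamma0_proper[OF H] in auto)

lemma fconj_real: "w \<in> edom (fconj H) \<Longrightarrow> fconj H w = ereal (real_of_ereal (fconj H w))"
  using fconj_edom_real[OF H] by (metis real_of_ereal.simps(1))

lemma convex_edom: "convex (edom (fconj H))"
  unfolding convex_def
proof (intro ballI allI impI)
  fix a b and u w :: real assume ab: "a \<in> edom (fconj H)" "b \<in> edom (fconj H)" and uw: "0 \<le> u" "0 \<le> w" "u + w = 1"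
  have "fconj H (u *\<^sub>R a + w *\<^sub>R b) \<le> ereal (u * real_of_ereal (fconj H a) + w * real_of_ereal (fconj H b))"
    using fconj_comb[OF fconj_real[OF ab(1)] fconj_real[OF ab(2)] uw] .
  thus "u *\<^sub>R a + w *\<^sub>R b \<in> edom (fconj H)" unfolding edom_def
    using order_le_less_trans by fastforce
qed

lemma convex_phi: "convex_on (edom (fconj H)) (\<lambda>w. real_of_ereal (fconj H w))"
  unfolding convex_on_def
proof (intro conjI ballI allI impI convex_edom)
  fix a b and u w :: real assume ab: "a \<in> edom (fconj H)" "b \<in> edom (fconj H)" and uw: "0 \<le> u" "0 \<le> w" "u + w = 1"
  have le: "fconj H (u *\<^sub>R a + w *\<^sub>R b) \<le> ereal (u * real_of_ereal (fconj H a) + w * real_of_ereal (fconj H b))"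
    using fconj_comb[OF fconj_real[OF ab(1)] fconj_real[OF ab(2)] uw] .
  have "u *\<^sub>R a + w *\<^sub>R b \<in> edom (fconj H)" using convex_edom ab uw unfolding convex_def by blast
  from fconj_real[OF this] le
  show "real_of_ereal (fconj H (u *\<^sub>R a + w *\<^sub>R b)) \<le> u * real_of_ereal (fconj H a) + w * real_of_ereal (fconj H b)"
    by (metis ereal_less_eq(3))
qed

lemma cont_phi: "continuous_on (interior (edom (fconj H))) (\<lambda>w. real_of_ereal (fconj H w))"
  by (rule convex_on_continuous[OF open_interior convex_on_subset[OF convex_phi interior_subset convex_interior[OF convex_edom]]])

lemma growth:
  assumes v: "v \<in> interior (edom (fconj H))"
  shows "\<exists>r>0. \<exists>M. cball v r \<subseteq> interior (edom (fconj H)) \<and>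
     (\<forall>w\<in>cball v r. \<bar>real_of_ereal (fconj H w)\<bar> \<le> M) \<and>
     (\<forall>x a w. H x = ereal a \<longrightarrow> norm (w - v) \<le> r/2 \<longrightarrow> a - inner x w \<ge> r/2 * norm x - M)"
proof -
  let ?U = "interior (edom (fconj H))"
  let ?p = "\<lambda>w. real_of_ereal (fconj H w)"
  obtain e where e: "e > 0" "ball v e \<subseteq> ?U" using open_contains_ball[THEN iffD1, OF open_interior] v by blast
  define r where "r = e/2"
  have r: "r > 0" "cball v r \<subseteq> ?U" using e unfolding r_def by auto
  have "compact (?p ` cball v r)"
    by (rule compact_continuous_image[OF continuous_on_subset[OF cont_phi r(2)] compact_cball])
  then obtain M where M: "\<forall>y\<in>?p ` cball v r. norm y \<le> M" using compact_imp_bounded bounded_iff by metis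
  have M': "\<bar>?p w\<bar> \<le> M" if "w \<in> cball v r" for w using M that by auto
  have U_sub: "?U \<subseteq> edom (fconj H)" by (rule interior_subset)
  have gr: "a - inner x w \<ge> r/2 * norm x - M" if hx: "H x = ereal a" and w: "norm (w - v) \<le> r/2" for x a w
  proof -
    have base: "a - inner x v \<ge> r * norm x - M"
    proof (cases "x = 0")
      case True
      have "v \<in> cball v r" using r by simp
      hence "fconj H v = ereal (?p v)" using fconj_real U_sub r(2) by blast
      from conj_real_le[OF this hx] have "- a \<le> ?p v" using True by simp
      moreover have "\<bar>?p v\<bar> \<le> M" using M'[of v] \<open>v \<in> cball v r\<close> by blast
      ultimately have "- M \<le> a" by arith
      thus ?thesis using True by simp
    next
      case False
      define w' where "w' = v + (r / norm x) *\<^sub>R x"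
      have nw: "norm (w' - v) = r" unfolding w'_def using False r by simp
      hence w'c: "w' \<in> cball v r" by (simp add: dist_norm norm_minus_commute)
      hence "fconj H w' = ereal (?p w')" using fconj_real U_sub r(2) by blast
      from conj_real_le[OF this hx] have 1: "inner x w' - a \<le> ?p w'" .
      have "inner x w' = inner x v + (r / norm x) * (norm x)^2"
        unfolding w'_def by (simp add: inner_add_right power2_norm_eq_inner)
      also have "\<dots> = inner x v + r * norm x" using False by (simp add: power2_eq_square)
      finally show ?thesis using 1 M'[OF w'c] by linarith
    qed
    have "\<bar>inner x (w - v)\<bar> \<le> norm x * norm (w - v)" by (rule Cauchy_Schwarz_ineq2)
    also have "\<dots> \<le> norm x * (r/2)" using w by (intro mult_left_mono) auto
    finally have "\<bar>inner x w - inner x v\<bar> \<le> r/2 * norm x" by (simp add: inner_diff_right mult.commute)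
    hence "inner x w - inner x v \<le> r/2 * norm x" by arith
    thus ?thesis using base by linarith
  qed
  show ?thesis using r M' gr by blast
qed


lemma seq_max:
  assumes v: "v \<in> interior (edom (fconj H))" and W: "W \<longlonglongrightarrow> v" "\<And>k. W k \<in> interior (edom (fconj H))"
    and X: "\<And>k. H (X k) = ereal (A k)"
      "\<And>k. inner (X k) (W k) - A k \<ge> real_of_ereal (fconj H (W k)) - e k"
    and e: "e \<longlonglongrightarrow> 0" and l: "X \<longlonglongrightarrow> l"
  shows "\<exists>h. H l = ereal h \<and> inner l v - h = real_of_ereal (fconj H v)"
proof -
  let ?p = "\<lambda>w. real_of_ereal (fconj H w)"
  have cont: "isCont ?p v" using cont_phi continuous_on_eq_continuous_at[OF open_interior] v by blast
  have b: "(\<lambda>k. inner (X k) (W k) - ?p (W k) + e k) \<longlonglongrightarrow> inner l v - ?p v + 0"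
    by (intro tendsto_intros l W(1) e isCont_tendsto_compose[OF cont W(1)])
  have ev: "eventually (\<lambda>k. H (X k) \<le> ereal (inner (X k) (W k) - ?p (W k) + e k)) sequentially"
  proof (rule always_eventually, rule allI)
    fix k show "H (X k) \<le> ereal (inner (X k) (W k) - ?p (W k) + e k)" using X(1)[of k] X(2)[of k] by simp
  qed
  from lsc_seq[OF gamma0_lsc[OF H] l ev] b have le: "H l \<le> ereal (inner l v - ?p v)" by simp
  obtain h where h: "H l = ereal h" using le gamma0_proper[OF H, of l] by (cases "H l") auto
  have fv: "fconj H v = ereal (?p v)" using fconj_real v interior_subset by blast
  have "inner l v - h \<le> ?p v" using conj_real_le[OF fv h] .
  with le h show ?thesis by auto
qed

lemma max_unique:
  assumes L: "legendre H" and v: "fconj H v = ereal c"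
    and x1: "H x1 = ereal h1" "inner x1 v - h1 = c" and x2: "H x2 = ereal h2" "inner x2 v - h2 = c"
  shows "x1 = x2"
proof (rule ccontr)
  assume ne: "x1 \<noteq> x2"
  have sub: "v \<in> subdiff H x" if hx: "H x = ereal h" "inner x v - h = c" for x h
    unfolding subdiff_def
  proof (safe)
    show "H x < \<infinity>" using hx by simp
    fix y show "H x + ereal (inner v (y - x)) \<le> H y"
    proof (cases "H y")
      case (real a)
      from conj_real_le[OF v real] have "inner y v - a \<le> c" .
      thus ?thesis using hx real by (simp add: inner_diff_right inner_commute)
    qed (use gamma0_proper[OF H, of y] in auto)
  qed
  have int: "x \<in> interior (edom H)" if hx: "H x = ereal h" "inner x v - h = c" for x h
  proof -
    have "x \<in> edom H" using hx unfolding edom_def by simp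
    moreover have "subdiff H x \<noteq> {}" using sub[OF hx] by blast
    ultimately show ?thesis using L unfolding legendre_def by blast
  qed
  have sc: "strictly_convex_on (interior (edom H)) H" using L unfolding legendre_def by blast
  define m where "m = (1/2::real) *\<^sub>R x1 + (1 - 1/2::real) *\<^sub>R x2"
  have allu: "\<forall>u. x1 \<noteq> x2 \<and> 0 < u \<and> u < 1 \<longrightarrow> H (u *\<^sub>R x1 + (1 - u) *\<^sub>R x2) < ereal u * H x1 + ereal (1 - u) * H x2"
    using sc int[OF x1] int[OF x2] unfolding strictly_convex_on_def by blast
  have "H ((1/2::real) *\<^sub>R x1 + (1 - 1/2::real) *\<^sub>R x2) < ereal (1/2) * H x1 + ereal (1 - 1/2) * H x2"
    using spec[OF allu, of "1/2"] ne by simp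
  hence lt: "H m < ereal (1/2) * H x1 + ereal (1 - 1/2) * H x2" unfolding m_def .
  hence lt': "H m < ereal (h1/2 + h2/2)" using x1 x2 by simp
  then obtain am where am: "H m = ereal am" using gamma0_proper[OF H, of m] by (cases "H m") auto
  have "am < h1/2 + h2/2" using lt' am by simp
  moreover have "inner m v - am \<le> c" using conj_real_le[OF v am] .
  moreover have "inner m v = inner x1 v / 2 + inner x2 v / 2" unfolding m_def by (simp add: inner_add_left)
  ultimately show False using x1(2) x2(2) by linarith
qed

lemma max_exists:
  assumes v: "v \<in> interior (edom (fconj H))"
  shows "\<exists>x h. H x = ereal h \<and> inner x v - h = real_of_ereal (fconj H v)"
proof -
  let ?p = "\<lambda>w. real_of_ereal (fconj H w)"
  obtain r M where r: "r > 0" "cball v r \<subseteq> interior (edom (fconj H))"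
    and Mb: "\<forall>w\<in>cball v r. \<bar>?p w\<bar> \<le> M"
    and gr: "\<forall>x a w. H x = ereal a \<longrightarrow> norm (w - v) \<le> r/2 \<longrightarrow> a - inner x w \<ge> r/2 * norm x - M"
    using growth[OF v] by blast
  have fv: "fconj H v = ereal (?p v)" using fconj_real v interior_subset by blast
  have "\<forall>k. \<exists>x a. H x = ereal a \<and> inner x v - a > ?p v - inverse (real (Suc k))"
  proof
    fix k
    have "ereal (?p v - inverse (real (Suc k))) < ereal (?p v)" by simp
    hence "ereal (?p v - inverse (real (Suc k))) < fconj H v" using fv by metis
    then obtain x where x: "ereal (?p v - inverse (real (Suc k))) < ereal (inner x v) - H x"
      unfolding fconj_def less_SUP_iff by blast
    then obtain a where a: "H x = ereal a" using gamma0_proper[OF H, of x] by (cases "H x") auto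
    show "\<exists>x a. H x = ereal a \<and> inner x v - a > ?p v - inverse (real (Suc k))"
      using x a by auto
  qed
  then obtain X A where XA: "\<And>k. H (X k) = ereal (A k)" "\<And>k. inner (X k) v - A k > ?p v - inverse (real (Suc k))"
    by metis
  have vb: "\<bar>?p v\<bar> \<le> M" using Mb r(1) by simp
  have "norm (X k) \<le> 2 * (2 * M + 1) / r" for k
  proof -
    have g: "A k - inner (X k) v \<ge> r/2 * norm (X k) - M" using gr XA(1)[of k] r(1) by simp
    have "inverse (real (Suc k)) \<le> 1" by (simp add: inverse_le_1_iff)
    hence "r/2 * norm (X k) \<le> 2 * M + 1" using g XA(2)[of k] vb by arith
    thus ?thesis using r(1) by (simp add: field_simps)
  qed
  hence "bounded (range X)" unfolding bounded_iff by blast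
  then obtain l s where s: "strict_mono s" "(X \<circ> s) \<longlonglongrightarrow> l"
    using bounded_imp_convergent_subsequence by blast
  have e: "(\<lambda>k. inverse (real (Suc (s k)))) \<longlonglongrightarrow> 0"
    using LIMSEQ_subseq_LIMSEQ[OF LIMSEQ_inverse_real_of_nat s(1)] by (simp add: comp_def)
  have "\<exists>h. H l = ereal h \<and> inner l v - h = ?p v"
    by (rule seq_max[OF v tendsto_const _ _ _ e s(2), of "A \<circ> s"])
       (use v XA in \<open>auto simp: less_imp_le\<close>)
  thus ?thesis by blast
qed


lemma near_conv:
  assumes L: "legendre H" and v: "v \<in> interior (edom (fconj H))"
    and xb: "H xb = ereal hb" "inner xb v - hb = real_of_ereal (fconj H v)" and eps: "\<epsilon> > 0"
  shows "\<exists>\<eta>>0. \<forall>w x a. norm (w - v) < \<eta> \<longrightarrow> H x = ereal a \<longrightarrow>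
           inner x w - a \<ge> real_of_ereal (fconj H w) - (norm (w - v))^2 \<longrightarrow> norm (x - xb) < \<epsilon>"
proof (rule ccontr)
  let ?p = "\<lambda>w. real_of_ereal (fconj H w)"
  let ?U = "interior (edom (fconj H))"
  obtain r M where r: "r > 0" "cball v r \<subseteq> ?U"
    and Mb: "\<forall>w\<in>cball v r. \<bar>?p w\<bar> \<le> M"
    and gr: "\<forall>x a w. H x = ereal a \<longrightarrow> norm (w - v) \<le> r/2 \<longrightarrow> a - inner x w \<ge> r/2 * norm x - M"
    using growth[OF v] by blast
  assume neg: "\<not> ?thesis"
  have "\<forall>k. \<exists>w x a. norm (w - v) < min (r/2) (inverse (real (Suc k))) \<and> H x = ereal a \<and>
      inner x w - a \<ge> ?p w - (norm (w - v))^2 \<and> \<not> norm (x - xb) < \<epsilon>"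
  proof
    fix k
    have "min (r/2) (inverse (real (Suc k))) > 0" using r(1) by simp
    thus "\<exists>w x a. norm (w - v) < min (r/2) (inverse (real (Suc k))) \<and> H x = ereal a \<and>
      inner x w - a \<ge> ?p w - (norm (w - v))^2 \<and> \<not> norm (x - xb) < \<epsilon>"
      using neg by blast
  qed
  then obtain W X A where WXA: "\<And>k. norm (W k - v) < min (r/2) (inverse (real (Suc k)))"
    "\<And>k. H (X k) = ereal (A k)" "\<And>k. inner (X k) (W k) - A k \<ge> ?p (W k) - (norm (W k - v))^2"
    "\<And>k. \<not> norm (X k - xb) < \<epsilon>"
    by metis
  have Wlim: "W \<longlonglongrightarrow> v"
  proof (rule LIM_zero_cancel, rule Lim_null_comparison)
    show "eventually (\<lambda>k. norm (W k - v) \<le> inverse (real (Suc k))) sequentially"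
      using WXA(1) by (intro always_eventually allI) (metis min_less_iff_conj less_imp_le)
    show "(\<lambda>k. inverse (real (Suc k))) \<longlonglongrightarrow> 0" by (rule LIMSEQ_inverse_real_of_nat)
  qed
  have WU: "W k \<in> ?U" for k
  proof -
    have "norm (W k - v) < r/2" using WXA(1)[of k] by simp
    hence "W k \<in> cball v r" using r(1) by (simp add: dist_norm norm_minus_commute)
    thus ?thesis using r(2) by blast
  qed
  have "norm (X k) \<le> 2 * (2 * M + 1) / r" for k
  proof -
    have n1: "norm (W k - v) < r/2" using WXA(1)[of k] by simp
    have n2: "norm (W k - v) < 1" using WXA(1)[of k] by (smt (verit) inverse_le_1_iff min_less_iff_conj of_nat_0_le_iff of_nat_Suc)
    have "(norm (W k - v))^2 \<le> 1" using n2 by (simp add: power_le_one)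
    have g: "A k - inner (X k) (W k) \<ge> r/2 * norm (X k) - M" using gr WXA(2)[of k] n1 by simp
    have "W k \<in> cball v r" using n1 r(1) by (simp add: dist_norm norm_minus_commute)
    hence "\<bar>?p (W k)\<bar> \<le> M" using Mb by blast
    hence "r/2 * norm (X k) \<le> 2 * M + 1" using g WXA(3)[of k] \<open>(norm (W k - v))^2 \<le> 1\<close> by arith
    thus ?thesis using r(1) by (simp add: field_simps)
  qed
  hence "bounded (range X)" unfolding bounded_iff by blast
  then obtain l s where s: "strict_mono s" "(X \<circ> s) \<longlonglongrightarrow> l"
    using bounded_imp_convergent_subsequence by blast
  have Ws: "(W \<circ> s) \<longlonglongrightarrow> v" by (rule LIMSEQ_subseq_LIMSEQ[OF Wlim s(1)])
  have e: "(\<lambda>k. (norm ((W \<circ> s) k - v))^2) \<longlonglongrightarrow> 0"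
  proof -
    have "(\<lambda>k. (norm ((W \<circ> s) k - v))^2) \<longlonglongrightarrow> (norm (v - v))^2"
      by (intro tendsto_intros Ws)
    thus ?thesis by simp
  qed
  obtain h where h: "H l = ereal h" "inner l v - h = ?p v"
    using seq_max[OF v Ws _ _ _ e s(2), of "A \<circ> s"] WU WXA(2,3) by auto
  have fv: "fconj H v = ereal (?p v)" using fconj_real v interior_subset by blast
  have "l = xb" using max_unique[OF L fv h xb] .
  hence "eventually (\<lambda>k. dist ((X \<circ> s) k) xb < \<epsilon>) sequentially"
    using s(2) eps tendstoD by blast
  then obtain N where N: "\<forall>n\<ge>N. dist ((X \<circ> s) n) xb < \<epsilon>" unfolding eventually_sequentially by blast
  hence "dist (X (s N)) xb < \<epsilon>" by simp
  thus False using WXA(4)[of "s N"] by (simp add: dist_norm)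
qed


lemma phi_deriv:
  assumes L: "legendre H" and v: "v \<in> interior (edom (fconj H))"
    and xb: "H xb = ereal hb" "inner xb v - hb = real_of_ereal (fconj H v)"
  shows "((\<lambda>w. real_of_ereal (fconj H w)) has_derivative (\<lambda>h. inner xb h)) (at v)"
  unfolding has_derivative_iff_norm
proof (intro conjI bounded_linear_inner_right)
  let ?p = "\<lambda>w. real_of_ereal (fconj H w)"
  let ?U = "interior (edom (fconj H))"
  show "((\<lambda>y. norm (?p y - ?p v - inner xb (y - v)) / norm (y - v)) \<longlongrightarrow> 0) (at v)"
    unfolding tendsto_iff
  proof (intro allI impI)
    fix e :: real assume e: "e > 0"
    obtain \<eta> where eta: "\<eta> > 0" "\<And>w x a. norm (w - v) < \<eta> \<Longrightarrow> H x = ereal a \<Longrightarrow>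
           inner x w - a \<ge> ?p w - (norm (w - v))^2 \<Longrightarrow> norm (x - xb) < e/2"
      using near_conv[OF L v xb, of "e/2"] e by auto
    obtain r where r: "r > 0" "ball v r \<subseteq> ?U"
      using open_contains_ball[THEN iffD1, OF open_interior] v by blast
    have fv: "fconj H v = ereal (?p v)" using fconj_real v interior_subset by blast
    show "eventually (\<lambda>y. dist (norm (?p y - ?p v - inner xb (y - v)) / norm (y - v)) 0 < e) (at v)"
      unfolding eventually_at
    proof (intro exI[of _ "min \<eta> (min r (e/2))"] conjI ballI impI)
      show "min \<eta> (min r (e/2)) > 0" using eta(1) r(1) e by simp
      fix y :: 'a assume y: "y \<noteq> v \<and> dist y v < min \<eta> (min r (e/2))"
      define h where "h = norm (y - v)"
      have hpos: "h > 0" using y h_def by simp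
      have hlt: "h < \<eta>" "h < r" "h < e/2" using y h_def by (auto simp: dist_norm)
      have "y \<in> ?U" using r(2) hlt(2) h_def by (auto simp: dist_norm norm_minus_commute)
      hence fy: "fconj H y = ereal (?p y)" using fconj_real interior_subset by blast
      have "ereal (?p y - h^2) < ereal (?p y)" using hpos by simp
      hence "ereal (?p y - h^2) < fconj H y" using fy by metis
      then obtain x where x: "ereal (?p y - h^2) < ereal (inner x y) - H x"
        unfolding fconj_def less_SUP_iff by blast
      then obtain a where a: "H x = ereal a" using gamma0_proper[OF H, of x] by (cases "H x") auto
      have xa: "inner x y - a > ?p y - h^2" using x a by simp
      have close: "norm (x - xb) < e/2" using eta(2)[of y x a] hlt(1) a xa h_def by simp
      have l1: "inner xb y - hb \<le> ?p y" using conj_real_le[OF fy xb(1)] .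
      have l2: "inner x v - a \<le> ?p v" using conj_real_le[OF fv a] .
      define D where "D = ?p y - ?p v - inner xb (y - v)"
      have D0: "D \<ge> 0" using l1 xb(2) unfolding D_def by (simp add: inner_diff_right)
      have "D \<le> inner (x - xb) (y - v) + h^2" using xa l2 unfolding D_def
        by (simp add: inner_diff_right inner_diff_left)
      also have "inner (x - xb) (y - v) \<le> norm (x - xb) * h" unfolding h_def by (rule norm_cauchy_schwarz)
      hence "inner (x - xb) (y - v) + h^2 \<le> norm (x - xb) * h + h^2" by simp
      also have "norm (x - xb) * h + h^2 < e/2 * h + e/2 * h"
      proof -
        have "norm (x - xb) * h < e/2 * h" using close hpos by simp
        moreover have "h^2 < e/2 * h" using hlt(3) hpos by (simp add: power2_eq_square)
        ultimately show ?thesis by simp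
      qed
      finally have "D < e * h" by simp
      hence "norm D / h < e" using D0 hpos by (simp add: divide_less_eq)
      thus "dist (norm (?p y - ?p v - inner xb (y - v)) / norm (y - v)) 0 < e"
        unfolding D_def h_def by simp
    qed
  qed
qed

lemma grad_eq:
  assumes "((\<lambda>w. real_of_ereal (fconj H w)) has_derivative (\<lambda>h. inner xb h)) (at v)"
  shows "grad (fconj H) v = xb"
proof -
  let ?g = "grad (fconj H) v"
  have "((\<lambda>w. real_of_ereal (fconj H w)) has_derivative (\<lambda>h. inner ?g h)) (at v)"
    unfolding grad_def by (rule someI[of _ xb]) (rule assms)
  from has_derivative_unique[OF this assms] have "(\<lambda>h. inner ?g h) = (\<lambda>h. inner xb h)" .
  hence "inner ?g (?g - xb) = inner xb (?g - xb)" by metis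
  hence "inner (?g - xb) (?g - xb) = 0" by (simp add: inner_diff_left)
  thus ?thesis by simp
qed

lemma bregman_nonneg:
  assumes L: "legendre H" and v: "v \<in> interior (edom (fconj H))" and v0: "v0 \<in> edom (fconj H)"
  shows "bregman (fconj H) v0 v \<ge> 0"
proof -
  let ?p = "\<lambda>w. real_of_ereal (fconj H w)"
  obtain xb hb where xb: "H xb = ereal hb" "inner xb v - hb = ?p v" using max_exists[OF v] by blast
  have g: "grad (fconj H) v = xb" by (rule grad_eq[OF phi_deriv[OF L v xb]])
  have fv: "fconj H v = ereal (?p v)" using fconj_real v interior_subset by blast
  have f0: "fconj H v0 = ereal (?p v0)" using fconj_real v0 by blast
  have "inner xb v0 - hb \<le> ?p v0" using conj_real_le[OF f0 xb(1)] .
  hence "0 \<le> ?p v0 - ?p v - inner xb (v0 - v)" using xb(2) by (simp add: inner_diff_right)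
  thus ?thesis unfolding bregman_def g by (subst fv, subst f0) simp
qed

end

lemma ereal_div_small:
  fixes c :: real
  shows "((\<lambda>t. ereal (c / t)) \<longlongrightarrow> 0) at_top"
proof -
  have "((\<lambda>t. c / t) \<longlongrightarrow> 0) at_top"
    by (rule real_tendsto_divide_at_top[OF tendsto_const filterlim_ident])
  hence "((\<lambda>t. ereal (c / t)) \<longlongrightarrow> ereal 0) at_top" by (simp only: lim_ereal)
  thus ?thesis by (simp add: zero_ereal_def)
qed

lemma part2:
  fixes J H :: "'a::euclidean_space \<Rightarrow> ereal"
  assumes J: "J \<in> Gamma0" "one_coercive J" and H: "H \<in> Gamma0" "legendre H"
    and v0: "v0 \<in> interior (edom (fconj H))" and z: "0 \<in> edom J"
  shows "((\<lambda>t. bregman_repr J H (t *\<^sub>R v0) t / ereal t) \<longlongrightarrow> 0) at_top"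
proof -
  obtain j0 where j0: "J 0 = ereal j0" using edom_real[OF J(1) z] .
  define p0 where "p0 = grad (fconj H) v0"
  obtain K where K: "\<And>y. ereal (norm p0 * norm y - K) \<le> J y" using coercive_bound[OF J, of "norm p0"] by auto
  have Kb: "fconj J p0 \<le> ereal K"
  proof (rule conj_le_real)
    fix x a assume "J x = ereal a"
    hence "norm p0 * norm x - K \<le> a" using K[of x] by simp
    moreover have "inner x p0 \<le> norm x * norm p0" by (rule norm_cauchy_schwarz)
    ultimately show "inner x p0 - a \<le> K" by (simp add: mult.commute)
  qed (use gamma0_proper[OF J(1)] in auto)
  have lowJ: "ereal (- j0) \<le> fconj J p" for p using conj_lower[of J 0 j0 p] j0 by simp
  have v0e: "v0 \<in> edom (fconj H)" using v0 interior_subset by blast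
  obtain c0 where c0: "fconj H v0 = ereal c0" using fconj_edom_real[OF H(1) v0e] .
  have b00: "bregman (fconj H) v0 v0 = 0" unfolding bregman_def c0 by simp
  have up: "bregman_repr J H (t *\<^sub>R v0) t / ereal t \<le> ereal (K / t)" if t: "t > 0" for t
  proof -
    have eq: "(1 / t) *\<^sub>R (t *\<^sub>R v0) = v0" using t by simp
    have "bregman_repr J H (t *\<^sub>R v0) t \<le> ereal t * bregman (fconj H) v0 v0 + fconj J (grad (fconj H) v0)"
      unfolding bregman_repr_def eq by (rule INF_lower[OF v0])
    also have "\<dots> \<le> ereal K" using Kb b00 unfolding p0_def by simp
    also have "\<dots> = ereal t * ereal (K / t)" using t by simp
    finally show ?thesis using t by (subst ereal_divide_le_pos) auto
  qed
  have low: "ereal (- j0 / t) \<le> bregman_repr J H (t *\<^sub>R v0) t / ereal t" if t: "t > 0" for t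
  proof -
    have eq: "(1 / t) *\<^sub>R (t *\<^sub>R v0) = v0" using t by simp
    have "ereal (- j0) \<le> bregman_repr J H (t *\<^sub>R v0) t"
      unfolding bregman_repr_def eq
    proof (rule INF_greatest)
      fix v assume v: "v \<in> interior (edom (fconj H))"
      have nn: "0 \<le> ereal t * bregman (fconj H) v0 v"
        using bregman_nonneg[OF H v v0e] t by simp
      show "ereal (- j0) \<le> ereal t * bregman (fconj H) v0 v + fconj J (grad (fconj H) v)"
        using add_mono[OF nn lowJ] by simp
    qed
    moreover have "ereal t * ereal (- j0 / t) = ereal (- j0)" using t by simp
    ultimately show ?thesis using t by (subst ereal_le_divide_pos) auto
  qed
  show ?thesis
  proof (rule order_tendstoI)
    fix a :: ereal assume a: "a < 0"
    have "eventually (\<lambda>t. a < ereal (- j0 / t)) at_top"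
      using order_tendstoD(1)[OF ereal_div_small a] .
    moreover have "eventually (\<lambda>t. (t::real) > 0) at_top" by (rule eventually_gt_at_top)
    ultimately show "eventually (\<lambda>t. a < bregman_repr J H (t *\<^sub>R v0) t / ereal t) at_top"
      by eventually_elim (use low in \<open>blast intro: less_le_trans\<close>)
  next
    fix b :: ereal assume b: "b > 0"
    have "eventually (\<lambda>t. ereal (K / t) < b) at_top"
      using order_tendstoD(2)[OF ereal_div_small b] .
    moreover have "eventually (\<lambda>t. (t::real) > 0) at_top" by (rule eventually_gt_at_top)
    ultimately show "eventually (\<lambda>t. bregman_repr J H (t *\<^sub>R v0) t / ereal t < b) at_top"
      by eventually_elim (use up in \<open>blast intro: le_less_trans\<close>)
  qed
qed

theorem mainTheorem8:
  fixes J H :: "real ^ 'n \<Rightarrow> ereal" and v0 d :: "real ^ 'n"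
  assumes A1: "J \<in> Gamma0" "H \<in> Gamma0" "one_coercive J" "legendre H"
    and v0: "v0 \<in> interior (edom (fconj H))"
    and d: "d \<in> edom J"
  shows "((\<lambda>t. hopf_lax J H (d + t *\<^sub>R v0) t / ereal t) \<longlongrightarrow> fconj H v0) at_top
         \<and> (0 \<in> edom J \<longrightarrow>
            ((\<lambda>t. bregman_repr J H (t *\<^sub>R v0) t / ereal t) \<longlongrightarrow> 0) at_top)"
proof (intro conjI impI)
  show "((\<lambda>t. hopf_lax J H (d + t *\<^sub>R v0) t / ereal t) \<longlongrightarrow> fconj H v0) at_top"
    using part1[OF A1(1,3) A1(2) _ d] v0 interior_subset by blast
  assume "0 \<in> edom J"
  thus "((\<lambda>t. bregman_repr J H (t *\<^sub>R v0) t / ereal t) \<longlongrightarrow> 0) at_top"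
    using part2[OF A1(1,3) A1(2,4) v0] by blast
qed

end
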